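(* Let $A\in\mathbb{R}^{m\times n}$, $A\ne0$, $b\in\mathbb{R}^m$ with $S_+\ne\emptyset$, $x_0\in\mathbb{R}^n_{++}$, and let $(x_k)$ be the iterates of entropic mirror descent with the Polyak-type stepsize, $$\alpha_k=\min\left\{\frac{f(x_k)}{\|\nabla f(x_k)\|^2_{x_k}},\ \frac{1.79}{\|\nabla f(x_k)\|_\infty}\right\},\qquad x_{k+1}=x_k\circ\exp(-\alpha_k\nabla f(x_k)),$$ with $f(x)=\frac12\|Ax-b\|_2^2$. Suppose $(x_k)$ converges to $z=\arg\min_{x\in S_+}D_h(x,x_0)$ and $z_{\min}>0$. Then for every $k\ge0$ $$D_h(z,x_{k+1})\le D_h(z,x_k)\left(1-\frac{-\lambda^+_{\min}\,z_{\min}\,W_0\!\left(-\exp\!\left(-1-\frac{D_h(z,x_k)}{z_{\min}}\right)\right)}{8\max_{j\le n}\|A_{:j}\|_2^2\,\big(\|z\|_1+D_h(z,x_k)\big)}\right),$$ and the same inequality holds with $D_h(z,x_k)$ replaced by $D_h(z,x_0)$ inside the fraction (a global linear rate). Consequently, asymptotically the contraction factor is $$1-\frac{\lambda^+_{\min}\,z_{\min}}{8\max_{j\le n}\|A_{:j}\|_2^2\,\|z\|_1}$$ (local linear rate).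
   Context: $S_+=\{x\in\mathbb{R}^n_+ : Ax=b\}$; $\mathbb{R}^n_{++}$ is the strictly positive orthant; $\circ$, $\exp$ act componentwise; $\nabla f(x)=A^\top(Ax-b)$; $\|v\|_x^2=\sum_i x_iv_i^2$; $z_{\min}=\min_i z_i$; $A_{:j}$ is the $j$-th column of $A$; $\lambda^+_{\min}$ is the smallest positive eigenvalue of $A^\top A$; $W_0$ is the principal branch of the Lambert $W$ function. $h(x)=\sum_i x_i(\log x_i-1)$ (with $0\log0=0$) and $D_h(x,y)=\sum_i\big(x_i\log\frac{x_i}{y_i}-x_i+y_i\big)$ for $x\in\mathbb{R}^n_+$, $y\in\mathbb{R}^n_{++}$. *)

theory Defs
  imports "HOL-Analysis.Analysis"
begin

definition lsq_f :: "real^'n^'m \<Rightarrow> real^'m \<Rightarrow> real^'n \<Rightarrow> real" where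
  "lsq_f A b x = (1/2) * (norm (A *v x - b))\<^sup>2"

definition lsq_grad :: "real^'n^'m \<Rightarrow> real^'m \<Rightarrow> real^'n \<Rightarrow> real^'n" where
  "lsq_grad A b x = transpose A *v (A *v x - b)"

definition local_norm_sq :: "real^'n \<Rightarrow> real^'n \<Rightarrow> real" where
  "local_norm_sq x v = (\<Sum>i\<in>UNIV. x$i * (v$i)\<^sup>2)"

definition inf_norm :: "real^'n \<Rightarrow> real" where
  "inf_norm v = Max {\<bar>v$i\<bar> | i. True}"

definition one_norm :: "real^'n \<Rightarrow> real" where
  "one_norm v = (\<Sum>i\<in>UNIV. \<bar>v$i\<bar>)"

definition vmin :: "real^'n \<Rightarrow> real" where
  "vmin z = Min {z$i | i. True}"

definition D_h :: "real^'n \<Rightarrow> real^'n \<Rightarrow> real" where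
  "D_h x y = (\<Sum>i\<in>UNIV. (if x$i = 0 then 0 else x$i * ln (x$i / y$i)) - x$i + y$i)"

definition S_plus :: "real^'n^'m \<Rightarrow> real^'m \<Rightarrow> (real^'n) set" where
  "S_plus A b = {x. (\<forall>i. 0 \<le> x$i) \<and> A *v x = b}"

definition polyak_step :: "real^'n^'m \<Rightarrow> real^'m \<Rightarrow> real^'n \<Rightarrow> real" where
  "polyak_step A b x = min (lsq_f A b x / local_norm_sq x (lsq_grad A b x))
                           ((179/100) / inf_norm (lsq_grad A b x))"

definition emd_update :: "real^'n^'m \<Rightarrow> real^'m \<Rightarrow> real^'n \<Rightarrow> real^'n" where
  "emd_update A b x = (\<chi> i. x$i * exp (- polyak_step A b x * lsq_grad A b x $ i))"

text \<open>Principal branch W_0 of the Lambert W function on [-1/e, \<infinity>).\<close>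
definition lambertW0 :: "real \<Rightarrow> real" where
  "lambertW0 y = (THE w. -1 \<le> w \<and> w * exp w = y)"

definition lambda_min_pos :: "real^'n^'m \<Rightarrow> real" where
  "lambda_min_pos A = Min {l. 0 < l \<and> (\<exists>v. v \<noteq> 0 \<and> (transpose A ** A) *v v = l *s v)}"

definition max_col_sq :: "real^'n^'m \<Rightarrow> real" where
  "max_col_sq A = Max {(norm (column j A))\<^sup>2 | j. True}"

definition rate :: "real^'n^'m \<Rightarrow> real^'n \<Rightarrow> real \<Rightarrow> real" where
  "rate A z d = 1 - (- lambda_min_pos A * vmin z * lambertW0 (- exp (-1 - d / vmin z)))
                    / (8 * max_col_sq A * (one_norm z + d))"

end

theory Submission
  imports Defs
begin

lemma exp_179: "exp (179/100::real) \<le> 59941/10000"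
proof -
  obtain t where t: "\<bar>t\<bar> \<le> \<bar>179/100::real\<bar>"
    "exp (179/100::real) = (\<Sum>m<10. ((179/100::real) ^ m) / fact m) + (exp t / fact 10) * (179/100) ^ 10"
    using Maclaurin_exp_le[of "179/100::real" 10] by blast
  have "exp t \<le> exp 2" using t(1) by simp
  also have "exp (2::real) = exp 1 * exp 1" by (simp flip: exp_add)
  also have "\<dots> \<le> 3 * 3" using exp_le by (intro mult_mono) auto
  finally have et: "exp t \<le> 9" by simp
  have "(\<Sum>m<10. ((179/100::real) ^ m) / fact m) \<le> 59894/10000"
    by (simp add: lessThan_nat_numeral fact_numeral power_divide)
  moreover have "(exp t / fact 10) * (179/100::real) ^ 10 \<le> 9 / fact 10 * (179/100) ^ 10"
    using et by (intro mult_right_mono divide_right_mono) auto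
  moreover have "9 / fact 10 * (179/100::real) ^ 10 \<le> 9/10000"
    by (simp add: fact_numeral power_divide)
  ultimately show ?thesis using t(2) by linarith
qed

lemma exp_quad_up: assumes "0 \<le> s" "s \<le> 179/100" shows "exp (s::real) \<le> 1 + s + s\<^sup>2"
proof (cases "s \<le> 1")
  case True then show ?thesis using exp_bound assms by blast
next
  case False
  define h where "h = (\<lambda>s::real. (1 + s + s\<^sup>2) * exp (-s))"
  have "h (179/100) \<le> h s"
  proof (rule DERIV_nonpos_imp_decreasing_open[of s "179/100" h])
    show "s \<le> 179/100" by fact
    fix y assume y: "s < y" "y < 179/100"
    have "DERIV h y :> (y - y\<^sup>2) * exp (-y)"
      unfolding h_def by (auto intro!: derivative_eq_intros simp: algebra_simps power2_eq_square)
    moreover have "(y - y\<^sup>2) * exp (-y) \<le> 0"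
      using y False by (intro mult_nonpos_nonneg) (auto simp: power2_eq_square)
    ultimately show "\<exists>d. DERIV h y :> d \<and> d \<le> 0" by blast
  next
    show "continuous_on {s..179/100} h" unfolding h_def by (intro continuous_intros)
  qed
  moreover have "1 \<le> h (179/100)"
  proof -
    have "exp (179/100::real) \<le> 1 + 179/100 + (179/100)\<^sup>2" using exp_179 by (simp add: power2_eq_square)
    moreover have "exp (- (179/100::real)) * exp (179/100) = 1" by (simp flip: exp_add)
    ultimately show ?thesis unfolding h_def
      by (metis exp_gt_zero mult_le_cancel_left_pos mult.commute)
  qed
  ultimately have "1 \<le> (1 + s + s\<^sup>2) * exp (-s)" unfolding h_def by simp
  then have "1 * exp s \<le> (1 + s + s\<^sup>2) * exp (-s) * exp s" by (intro mult_right_mono) auto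
  also have "\<dots> = 1 + s + s\<^sup>2" by (simp flip: exp_add)
  finally show ?thesis by simp
qed

lemma exp_quad_bound: assumes "-(179/100) \<le> t" shows "exp (-t) - 1 + t \<le> (t::real)\<^sup>2"
proof (cases "0 \<le> t")
  case True
  obtain u where u: "exp (-t) = (\<Sum>m<3. ((-t) ^ m) / fact m) + (exp u / fact 3) * (-t) ^ 3"
    using Maclaurin_exp_le[of "-t" 3] by blast
  have "(exp u / fact 3) * (-t) ^ 3 \<le> 0"
    using True by (intro mult_nonneg_nonpos) auto
  then have "exp (-t) \<le> 1 - t + t\<^sup>2/2" using u by (simp add: lessThan_nat_numeral fact_numeral power2_eq_square)
  then show ?thesis using zero_le_power2[of t] by linarith
next
  case False
  then show ?thesis using exp_quad_up[of "-t"] assms by simp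
qed

lemma wexp_strict: assumes "-1 \<le> a" "a < b" shows "a * exp a < b * exp (b::real)"
proof (rule DERIV_pos_imp_increasing_open[of a b "\<lambda>w. w * exp w"])
  show "a < b" by fact
  fix y assume y: "a < y" "y < b"
  have "DERIV (\<lambda>w. w * exp w) y :> (1 + y) * exp y"
    by (auto intro!: derivative_eq_intros simp: algebra_simps)
  moreover have "(1 + y) * exp y > 0" using y assms by auto
  ultimately show "\<exists>d. DERIV (\<lambda>w. w * exp w) y :> d \<and> 0 < d" by blast
next
  show "continuous_on {a..b} (\<lambda>w. w * exp w)" by (intro continuous_intros)
qed

lemma wexp_mono_iff: assumes "-1 \<le> a" "-1 \<le> b" shows "a * exp a \<le> b * exp b \<longleftrightarrow> a \<le> (b::real)"
  using wexp_strict[of a b] wexp_strict[of b a] assms by (cases a b rule: linorder_cases) auto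

lemma lambertW0_props:
  assumes "-exp(-1) \<le> y" "y < 0"
  shows "-1 \<le> lambertW0 y" "lambertW0 y * exp (lambertW0 y) = y" "lambertW0 y < 0"
proof -
  have cont: "continuous_on {-1..0} (\<lambda>w::real. w * exp w)" by (intro continuous_intros)
  have "\<exists>w. -1 \<le> w \<and> w \<le> 0 \<and> w * exp w = y"
    by (rule IVT'[OF _ _ _ cont]) (use assms in auto)
  then obtain w where w: "-1 \<le> w" "w \<le> 0" "w * exp w = y" by blast
  have uniq: "v = w" if v: "-1 \<le> v \<and> v * exp v = y" for v
  proof -
    have "v \<le> w" using wexp_mono_iff[of v w] v w by simp
    moreover have "w \<le> v" using wexp_mono_iff[of w v] v w by simp
    ultimately show ?thesis by simp
  qed
  have "lambertW0 y = w" unfolding lambertW0_def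
    by (rule the_equality) (use w uniq in blast)+
  then show "-1 \<le> lambertW0 y" "lambertW0 y * exp (lambertW0 y) = y" using w by auto
  show "lambertW0 y < 0"
  proof (rule ccontr)
    assume "\<not> lambertW0 y < 0"
    then have "0 \<le> w" using \<open>lambertW0 y = w\<close> by simp
    then have "0 \<le> w * exp w" by simp
    then show False using w assms by simp
  qed
qed

lemma lambertW0_at: "lambertW0 (-exp(-1)) = -1"
proof -
  have *: "-1 \<le> v \<and> v * exp v = -exp(-1) \<Longrightarrow> v = -1" for v :: real
    using wexp_mono_iff[of v "-1"] wexp_mono_iff[of "-1" v] by auto
  show ?thesis unfolding lambertW0_def by (rule the_equality) (simp, use * in blast)
qed

lemma tau_bound:
  assumes c: "0 \<le> c" and t: "0 < t" "t - 1 - ln t \<le> c"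
  shows "- lambertW0 (- exp (-1 - c)) \<le> t"
proof (rule ccontr)
  define y where "y = - exp (-1 - c)"
  have y: "-exp(-1) \<le> y" "y < 0" unfolding y_def using c by auto
  define \<tau> where "\<tau> = - lambertW0 y"
  note P = lambertW0_props[OF y]
  have tp: "0 < \<tau>" "\<tau> \<le> 1" using P unfolding \<tau>_def by auto
  have "\<tau> * exp (-\<tau>) = exp (-1 - c)" using P(2) unfolding \<tau>_def y_def by simp
  then have "ln (\<tau> * exp (-\<tau>)) = -1 - c" by simp
  then have lt: "ln \<tau> - \<tau> = -1 - c" using tp by (simp add: ln_mult)
  assume "\<not> - lambertW0 (- exp (-1 - c)) \<le> t"
  then have tt: "t < \<tau>" unfolding \<tau>_def y_def by simp
  have "ln t - ln \<tau> < (t - \<tau>) / \<tau>" using ln_diff_less[of t \<tau>] tt t tp by auto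
  moreover have "(t - \<tau>) / \<tau> \<le> t - \<tau>"
  proof -
    have "(t - \<tau>) * 1 \<le> (t - \<tau>) * \<tau>" using tt tp by (intro mult_left_mono_neg) auto
    then show ?thesis using tp by (simp add: divide_le_eq)
  qed
  ultimately show False using t lt by linarith
qed

lemma lambertW0_tendsto:
  assumes Y: "Y \<longlonglongrightarrow> -exp(-1)" and b: "\<forall>k. -exp(-1) \<le> Y k \<and> Y k < 0"
  shows "(\<lambda>k. lambertW0 (Y k)) \<longlonglongrightarrow> -1"
proof (rule LIMSEQ_I)
  fix r :: real assume r: "0 < r"
  define w where "w = -1 + min (r/2) (1/2)"
  have w: "-1 < w" "w < 0" "w < -1 + r" "-1 \<le> w" unfolding w_def using r by auto
  have "(-1) * exp (-1) < w * exp w" using wexp_strict[of "-1" w] w by auto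
  then have "-exp(-1) < w * exp w" by simp
  then have "\<forall>\<^sub>F k in sequentially. Y k < w * exp w"
    by (rule order_tendstoD(2)[OF Y])
  then obtain N where N: "\<And>k. k \<ge> N \<Longrightarrow> Y k < w * exp w" by (auto simp: eventually_sequentially)
  show "\<exists>no. \<forall>n\<ge>no. norm (lambertW0 (Y n) - -1) < r"
  proof (intro exI allI impI)
    fix n assume "N \<le> n"
    note P = lambertW0_props[of "Y n"]
    have "lambertW0 (Y n) < w"
    proof (rule ccontr)
      assume "\<not> lambertW0 (Y n) < w"
      then have "w * exp w \<le> lambertW0 (Y n) * exp (lambertW0 (Y n))"
        using wexp_mono_iff[of w "lambertW0 (Y n)"] w P b by auto
      then show False using N[OF \<open>N \<le> n\<close>] P b by auto
    qed
    then show "norm (lambertW0 (Y n) - -1) < r" using P b w by auto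
  qed
qed

lemma inner_transpose: "(transpose A *v r) \<bullet> q = r \<bullet> (A *v (q::real^'n))"
  for A :: "real^'n^'m"
  by (simp add: inner_vec_def matrix_vector_mult_def transpose_def sum_distrib_left sum_distrib_right
      mult.assoc mult.left_commute) (rule sum.swap)

lemma quad_zero: assumes "\<And>t::real. 0 \<le> a * t + b * t\<^sup>2" shows "a = 0"
proof (rule ccontr)
  assume a: "a \<noteq> 0"
  define s where "s = 1 / (\<bar>b\<bar> + 1)"
  have s: "0 < s" "b * s < 1" unfolding s_def by (auto simp: field_simps)
  have "0 \<le> a * (- a * s) + b * (- a * s)\<^sup>2" by (rule assms)
  also have "\<dots> = a\<^sup>2 * s * (b * s - 1)" by (simp add: power2_eq_square algebra_simps)
  also have "\<dots> < 0" using a s by (intro mult_pos_neg) auto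
  finally show False by simp
qed

definition nullA :: "real^'n^'m \<Rightarrow> (real^'n) set" where "nullA A = {q. A *v q = 0}"
definition perpA :: "real^'n^'m \<Rightarrow> (real^'n) set" where "perpA A = {p. \<forall>q\<in>nullA A. p \<bullet> q = 0}"

lemma perpA_diff: "p \<in> perpA A \<Longrightarrow> p' \<in> perpA A \<Longrightarrow> p - p' \<in> perpA A"
  by (auto simp: perpA_def inner_diff_left)
lemma perpA_add: "p \<in> perpA A \<Longrightarrow> p' \<in> perpA A \<Longrightarrow> p + p' \<in> perpA A"
  by (auto simp: perpA_def inner_add_left)
lemma perpA_scale: "p \<in> perpA A \<Longrightarrow> c *s p \<in> perpA A"
  by (auto simp: perpA_def inner_vec_def sum_distrib_left[symmetric] mult.assoc)
lemma perpA_transpose: "transpose A *v y \<in> perpA A"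
proof -
  have "(transpose A *v y) \<bullet> q = 0" if "A *v q = 0" for q
    unfolding inner_transpose that by simp
  then show ?thesis unfolding perpA_def nullA_def by blast
qed

lemma scaleR_eq_smult: "c *\<^sub>R (v::real^'n) = c *s v"
  by (simp add: vec_eq_iff)

lemma decomp_null:
  fixes A :: "real^'n^'m"
  shows "\<exists>p q. d = p + q \<and> A *v q = 0 \<and> p \<in> perpA A"
proof -
  have cl: "closed (nullA A)" unfolding nullA_def
    by (intro closed_Collect_eq continuous_intros matrix_vector_mult_linear_continuous_on)
  have ne: "nullA A \<noteq> {}" unfolding nullA_def by (auto intro: exI[of _ 0])
  obtain q where q: "q \<in> nullA A" "\<And>y. y \<in> nullA A \<Longrightarrow> dist d q \<le> dist d y"
    using distance_attains_inf[OF cl ne] by blast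
  define p where "p = d - q"
  have "p \<in> perpA A"
    unfolding perpA_def mem_Collect_eq
  proof (intro ballI)
    fix w assume w: "w \<in> nullA A"
    have "0 \<le> (- 2 * (p \<bullet> w)) * t + (w \<bullet> w) * t\<^sup>2" for t
    proof -
      have "q + t *\<^sub>R w \<in> nullA A" using q(1) w by (simp add: nullA_def matrix_vector_right_distrib matrix_vector_mult_scaleR)
      then have "dist d q \<le> dist d (q + t *\<^sub>R w)" by (rule q(2))
      then have "(norm p)\<^sup>2 \<le> (norm (p - t *\<^sub>R w))\<^sup>2" unfolding p_def dist_norm
        by (simp add: algebra_simps)
      moreover have "(norm (p - t *\<^sub>R w))\<^sup>2 = p \<bullet> p - 2 * t * (p \<bullet> w) + t\<^sup>2 * (w \<bullet> w)"
        unfolding power2_norm_eq_inner by (simp add: inner_diff_left inner_diff_right inner_commute algebra_simps power2_eq_square)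
      moreover have "(norm p)\<^sup>2 = p \<bullet> p" by (simp add: power2_norm_eq_inner)
      ultimately show ?thesis by (simp add: algebra_simps)
    qed
    then have "- 2 * (p \<bullet> w) = 0" by (rule quad_zero)
    then show "p \<bullet> w = 0" by simp
  qed
  then show ?thesis using q(1) unfolding p_def nullA_def by (intro exI[of _ "d - q"] exI[of _ q]) auto
qed

lemma perpA_scaleR: "p \<in> perpA A \<Longrightarrow> c *\<^sub>R p \<in> perpA A"
  by (auto simp: perpA_def)

definition eigset :: "real^'n^'m \<Rightarrow> real set" where
  "eigset A = {l. 0 < l \<and> (\<exists>v. v \<noteq> 0 \<and> (transpose A ** A) *v v = l *s v)}"

lemma G_inner: "((transpose A ** A) *v v) \<bullet> w = (A *v v) \<bullet> (A *v (w::real^'n))"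
  for A :: "real^'n^'m"
proof -
  have "(transpose A ** A) *v v = transpose A *v (A *v v)" by (simp only: matrix_vector_mul_assoc)
  then show ?thesis by (simp only: inner_transpose)
qed

lemma smult_inner: "(c *s v) \<bullet> (w::real^'n) = c * (v \<bullet> w)"
  by (metis inner_scaleR_left scaleR_eq_smult)

lemma eig_orth:
  fixes A :: "real^'n^'m"
  assumes "l1 \<noteq> l2" "(transpose A ** A) *v v1 = l1 *s v1" "(transpose A ** A) *v v2 = l2 *s v2"
  shows "v1 \<bullet> v2 = 0"
proof -
  have "l1 * (v1 \<bullet> v2) = (A *v v1) \<bullet> (A *v v2)" using G_inner[of A v1 v2] assms(2) by (simp add: smult_inner)
  moreover have "l2 * (v2 \<bullet> v1) = (A *v v2) \<bullet> (A *v v1)" using G_inner[of A v2 v1] assms(3) by (simp add: smult_inner)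
  ultimately have "(l1 - l2) * (v1 \<bullet> v2) = 0" by (simp add: inner_commute algebra_simps)
  then show ?thesis using assms(1) by simp
qed

lemma eig_finite: "finite (eigset (A::real^'n^'m))"
proof (rule ccontr)
  assume inf: "infinite (eigset A)"
  obtain F where F: "finite F" "card F = Suc DIM(real^'n)" "F \<subseteq> eigset A"
    using infinite_arbitrarily_large[OF inf] by blast
  define ev where "ev l = (SOME v::real^'n. v \<noteq> 0 \<and> (transpose A ** A) *v v = l *s v)" for l
  have ev: "ev l \<noteq> 0 \<and> (transpose A ** A) *v ev l = l *s ev l" if "l \<in> eigset A" for l
    unfolding ev_def by (rule someI_ex) (use that in \<open>auto simp: eigset_def\<close>)
  have inj: "inj_on ev F"
  proof (rule inj_onI)
    fix l1 l2 assume l: "l1 \<in> F" "l2 \<in> F" "ev l1 = ev l2"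
    show "l1 = l2"
    proof (rule ccontr)
      assume "l1 \<noteq> l2"
      then have "ev l1 \<bullet> ev l2 = 0" using eig_orth ev l F(3) by blast
      then show False using l ev F(3) by auto
    qed
  qed
  have po: "pairwise orthogonal (ev ` F)"
    unfolding pairwise_def orthogonal_def
  proof (intro ballI impI)
    fix a c assume a: "a \<in> ev ` F" and c: "c \<in> ev ` F" and ac: "a \<noteq> c"
    obtain l1 where l1: "l1 \<in> F" "a = ev l1" using a by blast
    obtain l2 where l2: "l2 \<in> F" "c = ev l2" using c by blast
    have "l1 \<noteq> l2" using ac l1 l2 by blast
    then show "a \<bullet> c = 0" using eig_orth[of l1 l2 A "ev l1" "ev l2"] ev l1 l2 F(3) by blast
  qed
  have "0 \<notin> ev ` F" using ev F(3) by auto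
  then have "independent (ev ` F)" using pairwise_orthogonal_independent po by blast
  then have "card (ev ` F) \<le> DIM(real^'n)" using independent_bound by blast
  moreover have "card (ev ` F) = Suc DIM(real^'n)" using card_image[OF inj] F(2) by simp
  ultimately show False by simp
qed

lemma rayleigh:
  fixes A :: "real^'n^'m"
  assumes "A \<noteq> 0"
  shows "\<exists>\<mu>\<in>eigset A. \<forall>p\<in>perpA A. \<mu> * (norm p)\<^sup>2 \<le> (norm (A *v p))\<^sup>2"
proof -
  have clP: "closed (perpA A)"
  proof -
    have "perpA A = (\<Inter>q\<in>nullA A. {p. q \<bullet> p = 0})" by (auto simp: perpA_def inner_commute)
    then show ?thesis by (auto intro!: closed_INT closed_hyperplane)
  qed
  define K where "K = perpA A \<inter> sphere 0 1"
  have cK: "compact K" unfolding K_def by (intro closed_Int_compact clP compact_sphere)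
  obtain i where i: "A $ i \<noteq> 0" using assms by (auto simp: vec_eq_iff)
  have ri: "A $ i \<in> perpA A"
    unfolding perpA_def nullA_def
  proof (intro CollectI ballI)
    fix q assume "q \<in> {q. A *v q = 0}"
    then have "(A *v q) $ i = 0" by simp
    then show "A $ i \<bullet> q = 0" by (simp add: matrix_vector_mult_def inner_vec_def)
  qed
  have "(1 / norm (A $ i)) *\<^sub>R (A $ i) \<in> K"
    unfolding K_def using perpA_scaleR[OF ri] i by auto
  then have neK: "K \<noteq> {}" by blast
  have cont: "continuous_on K (\<lambda>p. (norm (A *v p))\<^sup>2)"
    by (intro continuous_intros matrix_vector_mult_linear_continuous_on)
  obtain ps where ps: "ps \<in> K" "\<And>y. y \<in> K \<Longrightarrow> (norm (A *v ps))\<^sup>2 \<le> (norm (A *v y))\<^sup>2"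
    using continuous_attains_inf[OF cK neK cont] by blast
  define \<mu> where "\<mu> = (norm (A *v ps))\<^sup>2"
  have psP: "ps \<in> perpA A" and ps1: "norm ps = 1" using ps(1) by (auto simp: K_def)
  have bound: "\<mu> * (norm p)\<^sup>2 \<le> (norm (A *v p))\<^sup>2" if p: "p \<in> perpA A" for p
  proof (cases "p = 0")
    case True then show ?thesis by simp
  next
    case False
    have "(1 / norm p) *\<^sub>R p \<in> K" unfolding K_def using perpA_scaleR[OF p] False by auto
    then have "\<mu> \<le> (norm (A *v ((1 / norm p) *\<^sub>R p)))\<^sup>2" unfolding \<mu>_def by (rule ps(2))
    also have "\<dots> = (norm (A *v p))\<^sup>2 / (norm p)\<^sup>2"
      by (simp add: matrix_vector_mult_scaleR power_divide)
    finally show ?thesis using False by (simp add: field_simps)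
  qed
  have mupos: "\<mu> > 0"
  proof (rule ccontr)
    assume "\<not> \<mu> > 0"
    then have "A *v ps = 0" unfolding \<mu>_def by simp
    then have "ps \<in> nullA A" by (simp add: nullA_def)
    then have "ps \<bullet> ps = 0" using psP by (simp add: perpA_def)
    then show False using ps1 by simp
  qed
  define G where "G = transpose A ** A"
  define e where "e = G *v ps - \<mu> *s ps"
  have "G *v ps = transpose A *v (A *v ps)" unfolding G_def by (simp only: matrix_vector_mul_assoc)
  then have "G *v ps \<in> perpA A" by (simp only: perpA_transpose)
  then have eP: "e \<in> perpA A" unfolding e_def using perpA_diff[OF _ perpA_scale[OF psP]] by blast
  have "0 \<le> (2 * (e \<bullet> e)) * t + ((norm (A *v e))\<^sup>2 - \<mu> * (e \<bullet> e)) * t\<^sup>2" for t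
  proof -
    have "ps + t *\<^sub>R e \<in> perpA A" using perpA_add[OF psP perpA_scaleR[OF eP]] .
    then have "\<mu> * (norm (ps + t *\<^sub>R e))\<^sup>2 \<le> (norm (A *v (ps + t *\<^sub>R e)))\<^sup>2" by (rule bound)
    moreover have "(norm (ps + t *\<^sub>R e))\<^sup>2 = 1 + 2 * t * (ps \<bullet> e) + t\<^sup>2 * (e \<bullet> e)"
      using norm_eq_1[THEN iffD1, OF ps1] unfolding power2_norm_eq_inner
      by (simp add: inner_add_left inner_add_right inner_commute algebra_simps power2_eq_square)
    moreover have "(norm (A *v (ps + t *\<^sub>R e)))\<^sup>2 = \<mu> + 2 * t * ((A *v ps) \<bullet> (A *v e)) + t\<^sup>2 * (norm (A *v e))\<^sup>2"
      unfolding \<mu>_def power2_norm_eq_inner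
      by (simp add: matrix_vector_right_distrib matrix_vector_mult_scaleR inner_add_left inner_add_right inner_commute algebra_simps power2_eq_square)
    moreover have "(A *v ps) \<bullet> (A *v e) = e \<bullet> e + \<mu> * (ps \<bullet> e)"
    proof -
      have "(A *v ps) \<bullet> (A *v e) = (G *v ps) \<bullet> e" unfolding G_def by (rule G_inner[symmetric])
      also have "G *v ps = e + \<mu> *s ps" unfolding e_def by simp
      finally show ?thesis by (simp add: inner_add_left smult_inner)
    qed
    ultimately show ?thesis by (simp add: algebra_simps)
  qed
  then have "2 * (e \<bullet> e) = 0" by (rule quad_zero)
  then have "e = 0" by simp
  then have "G *v ps = \<mu> *s ps" unfolding e_def by simp
  moreover have "ps \<noteq> 0" using ps1 by auto
  ultimately have "\<mu> \<in> eigset A" using mupos unfolding eigset_def G_def by blast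
  then show ?thesis using bound by blast
qed

lemma lambda_props:
  fixes A :: "real^'n^'m"
  assumes "A \<noteq> 0"
  shows "lambda_min_pos A > 0" "\<And>p. p \<in> perpA A \<Longrightarrow> lambda_min_pos A * (norm p)\<^sup>2 \<le> (norm (A *v p))\<^sup>2"
proof -
  obtain \<mu> where mu: "\<mu> \<in> eigset A" "\<forall>p\<in>perpA A. \<mu> * (norm p)\<^sup>2 \<le> (norm (A *v p))\<^sup>2"
    using rayleigh[OF assms] by blast
  have eq: "lambda_min_pos A = Min (eigset A)" unfolding lambda_min_pos_def eigset_def ..
  have "Min (eigset A) \<in> eigset A" using eig_finite mu(1) by (intro Min_in) auto
  then show "lambda_min_pos A > 0" unfolding eq by (simp add: eigset_def)
  have le: "lambda_min_pos A \<le> \<mu>" unfolding eq using eig_finite mu(1) by (rule Min_le)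
  fix p assume "p \<in> perpA A"
  then have "\<mu> * (norm p)\<^sup>2 \<le> (norm (A *v p))\<^sup>2" using mu by blast
  moreover have "lambda_min_pos A * (norm p)\<^sup>2 \<le> \<mu> * (norm p)\<^sup>2" using le by (intro mult_right_mono) auto
  ultimately show "lambda_min_pos A * (norm p)\<^sup>2 \<le> (norm (A *v p))\<^sup>2" by linarith
qed

lemma key_spectral:
  fixes A :: "real^'n^'m"
  assumes "A \<noteq> 0" "u \<in> perpA A"
  shows "lambda_min_pos A * (u \<bullet> d)\<^sup>2 \<le> (u \<bullet> u) * (norm (A *v d))\<^sup>2"
proof -
  obtain p q where pq: "d = p + q" "A *v q = 0" "p \<in> perpA A" using decomp_null by blast
  have "u \<bullet> q = 0" using assms(2) pq(2) by (simp add: perpA_def nullA_def)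
  then have ud: "u \<bullet> d = u \<bullet> p" using pq(1) by (simp add: inner_add_right)
  have Ad: "A *v d = A *v p" using pq by (simp add: matrix_vector_right_distrib)
  have "(u \<bullet> p)\<^sup>2 \<le> (u \<bullet> u) * (p \<bullet> p)" by (rule Cauchy_Schwarz_ineq)
  then have "lambda_min_pos A * (u \<bullet> p)\<^sup>2 \<le> (u \<bullet> u) * (lambda_min_pos A * (norm p)\<^sup>2)"
    using lambda_props(1)[OF assms(1)] by (simp add: power2_norm_eq_inner mult_left_mono algebra_simps)
  also have "\<dots> \<le> (u \<bullet> u) * (norm (A *v p))\<^sup>2"
    using lambda_props(2)[OF assms(1) pq(3)] by (intro mult_left_mono) auto
  finally show ?thesis using ud Ad by simp
qed

lemma finite_range_set: "finite {f i | i::'n::finite. True}"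
  by (simp add: full_SetCompr_eq)

lemma inf_norm_ge: "\<bar>v$j\<bar> \<le> inf_norm v"
  unfolding inf_norm_def by (rule Max_ge[OF finite_range_set]) auto

lemma inf_norm_attained: "\<exists>j. inf_norm v = \<bar>v$j\<bar>"
proof -
  have "inf_norm v \<in> {\<bar>v$i\<bar> | i. True}" unfolding inf_norm_def
    by (rule Max_in[OF finite_range_set]) auto
  then show ?thesis by auto
qed

lemma inf_norm_nonneg: "0 \<le> inf_norm v"
  using inf_norm_ge[of v] abs_ge_zero order_trans by blast

lemma vmin_le: "vmin z \<le> z$i"
  unfolding vmin_def by (rule Min_le[OF finite_range_set]) auto

lemma col_le: "(norm (column j A))\<^sup>2 \<le> max_col_sq A"
  unfolding max_col_sq_def by (rule Max_ge[OF finite_range_set]) auto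

lemma M_pos: assumes "(A::real^'n^'m) \<noteq> 0" shows "max_col_sq A > 0"
proof -
  obtain i j where "A$i$j \<noteq> 0" using assms by (auto simp: vec_eq_iff)
  then have "column j A \<noteq> 0" by (auto simp: column_def vec_eq_iff)
  then have "(norm (column j A))\<^sup>2 > 0" by simp
  then show ?thesis using col_le[of j A] by linarith
qed

lemma grad_comp: "(transpose A *v r) $ j = column j A \<bullet> (r::real^'m)"
  for A :: "real^'n^'m"
  by (simp add: matrix_vector_mult_def transpose_def column_def inner_vec_def mult.commute)

lemma colbound: "\<bar>(transpose A *v r) $ j\<bar> \<le> sqrt (max_col_sq A) * norm (r::real^'m)"
  for A :: "real^'n^'m"
proof -
  have "\<bar>(transpose A *v r) $ j\<bar> \<le> norm (column j A) * norm r"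
    unfolding grad_comp by (rule Cauchy_Schwarz_ineq2)
  moreover have "norm (column j A) \<le> sqrt (max_col_sq A)"
    using col_le[of j A] by (simp add: real_le_rsqrt)
  ultimately show ?thesis by (meson mult_right_mono norm_ge_zero order_trans)
qed

lemma Av_bound: "norm (A *v v) \<le> sqrt (max_col_sq A) * (\<Sum>j\<in>UNIV. \<bar>v$j\<bar>)"
  for A :: "real^'n^'m"
proof -
  have "norm (A *v v) = norm (\<Sum>j\<in>UNIV. v$j *\<^sub>R column j A)"
    by (simp add: matrix_mult_sum scaleR_eq_smult)
  also have "\<dots> \<le> (\<Sum>j\<in>UNIV. norm (v$j *\<^sub>R column j A))" by (rule norm_sum)
  also have "\<dots> \<le> (\<Sum>j\<in>UNIV. \<bar>v$j\<bar> * sqrt (max_col_sq A))"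
  proof (rule sum_mono)
    fix j
    have "norm (column j A) \<le> sqrt (max_col_sq A)"
      using col_le[of j A] by (simp add: real_le_rsqrt)
    then show "norm (v$j *\<^sub>R column j A) \<le> \<bar>v$j\<bar> * sqrt (max_col_sq A)"
      by (simp add: mult_left_mono)
  qed
  finally show ?thesis by (simp add: sum_distrib_left mult.commute)
qed

lemma Dterm_nonneg: assumes "0 < a" "0 < y" shows "0 \<le> a * ln (a / y) - a + (y::real)"
proof -
  have "ln (y / a) \<le> y / a - 1" using assms by (intro ln_le_minus_one) auto
  then have "ln (a / y) \<ge> 1 - y / a" using assms by (simp add: ln_div)
  then have "a * ln (a / y) \<ge> a * (1 - y / a)" using assms by (intro mult_left_mono) auto
  moreover have "a * (1 - y / a) = a - y" using assms by (simp add: field_simps)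
  ultimately show ?thesis by linarith
qed

lemma Dh_form: assumes "\<forall>i. 0 < z$i" shows "D_h z y = (\<Sum>i\<in>UNIV. z$i * ln (z$i / y$i) - z$i + y$i)"
  unfolding D_h_def using assms by (intro sum.cong) (auto simp: less_imp_neq[symmetric])

lemma logsq: assumes "0 < a" "0 < b" "0 < m" "m \<le> a" "m \<le> b"
  shows "(ln a - ln b)\<^sup>2 \<le> (ln a - ln b) * (a - b) / (m::real)"
proof -
  have key: "(ln p - ln q)\<^sup>2 \<le> (ln p - ln q) * (p - q) / m" if pq: "0 < q" "q \<le> p" "m \<le> q" for p q
  proof -
    have l0: "0 \<le> ln p - ln q" using pq assms by simp
    have "ln p - ln q \<le> (p - q) / q" using ln_diff_le[of p q] pq assms by simp
    also have "\<dots> \<le> (p - q) / m" using pq assms by (intro divide_left_mono) auto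
    finally have "(ln p - ln q) * (ln p - ln q) \<le> (ln p - ln q) * ((p - q) / m)"
      using l0 by (intro mult_left_mono) auto
    then show ?thesis by (simp add: power2_eq_square)
  qed
  show ?thesis
  proof (cases "b \<le> a")
    case True then show ?thesis using key[of b a] assms by simp
  next
    case False
    then have "(ln b - ln a)\<^sup>2 \<le> (ln b - ln a) * (b - a) / m" using key[of a b] assms by simp
    then show ?thesis by (simp add: power2_commute algebra_simps)
  qed
qed

lemma Dterm_le: assumes "0 < a" "0 < y" shows "a * ln (a / y) - a + (y::real) \<le> (ln a - ln y) * (a - y)"
proof -
  have "0 \<le> y * ln (y / a) - y + a" by (rule Dterm_nonneg) (use assms in auto)
  then show ?thesis using assms by (simp add: ln_div algebra_simps)
qed

lemma x_bound: assumes "0 < a" "0 < y" shows "y \<le> 2 * (a * ln (a / y) - a + y) + 2 * (a::real)"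
proof -
  have "ln (y / a) \<le> y / a / 2 + ln 2 - 1"
  proof -
    have "ln (y / a / 2) \<le> y / a / 2 - 1" using assms by (intro ln_le_minus_one) auto
    moreover have "ln (y / a / 2) = ln (y / a) - ln 2" using ln_div[of "y/a" 2] assms by simp
    ultimately show ?thesis by simp
  qed
  then have "ln (y / a) \<le> y / (2 * a)" using ln_2_less_1 by simp
  then have "a * ln (y / a) \<le> a * (y / (2 * a))" using assms by (intro mult_left_mono) auto
  then have "a * ln (y / a) \<le> y / 2" using assms by simp
  then show ?thesis using assms by (simp add: ln_div algebra_simps)
qed

lemma step_lemma:
  fixes A :: "real^'n^'m" and b :: "real^'m" and z x :: "real^'n" and c :: real
  assumes A0: "A \<noteq> 0" and Az: "A *v z = b" and zm: "vmin z > 0" and xpos: "\<forall>i. 0 < x$i"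
    and uP: "(\<chi> i. ln (z$i) - ln (x$i)) \<in> perpA A"
    and cD: "D_h z x \<le> c"
  shows "D_h z (emd_update A b x) \<le> D_h z x - polyak_step A b x * lsq_f A b x"
    and "D_h z x * (lambda_min_pos A * vmin z * (- lambertW0 (- exp (-1 - c / vmin z))))
           / (8 * max_col_sq A * (one_norm z + c)) \<le> polyak_step A b x * lsq_f A b x"
proof -
  define zm where "zm = vmin z"
  have zpos: "\<forall>i. 0 < z$i" using zm vmin_le[of z] by (meson less_le_trans)
  define D where "D = D_h z x"
  have Dsum: "D = (\<Sum>i\<in>UNIV. z$i * ln (z$i / x$i) - z$i + x$i)" unfolding D_def by (rule Dh_form[OF zpos])
  have Dterm0: "\<And>i. 0 \<le> z$i * ln (z$i / x$i) - z$i + x$i" using zpos xpos Dterm_nonneg by blast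
  have D0: "0 \<le> D" unfolding Dsum by (rule sum_nonneg) (use Dterm0 in auto)
  have Dti: "z$i * ln (z$i / x$i) - z$i + x$i \<le> D" for i
    unfolding Dsum by (rule member_le_sum) (use Dterm0 in auto)
  define r where "r = A *v x - b"
  define g where "g = lsq_grad A b x"
  define f where "f = lsq_f A b x"
  define L where "L = local_norm_sq x g"
  define I where "I = inf_norm g"
  define \<alpha> where "\<alpha> = polyak_step A b x"
  define M where "M = max_col_sq A"
  define Z where "Z = one_norm z"
  define lam where "lam = lambda_min_pos A"
  have g_def': "g = transpose A *v r" unfolding g_def r_def lsq_grad_def ..
  have f_def': "f = (norm r)\<^sup>2 / 2" unfolding f_def r_def lsq_f_def by simp
  have f0: "0 \<le> f" unfolding f_def' by simp
  have L0: "0 \<le> L" unfolding L_def local_norm_sq_def using xpos by (auto intro!: sum_nonneg mult_nonneg_nonneg simp: less_imp_le)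
  have I0: "0 \<le> I" unfolding I_def by (rule inf_norm_nonneg)
  have M0: "0 < M" unfolding M_def using M_pos[OF A0] .
  have Z_def': "Z = (\<Sum>i\<in>UNIV. z$i)" unfolding Z_def one_norm_def using zpos by (simp add: less_imp_le)
  have Z0: "0 < Z" unfolding Z_def' using zpos by (intro sum_pos) auto
  have lam0: "0 < lam" unfolding lam_def using lambda_props(1)[OF A0] .
  have \<alpha>_def': "\<alpha> = min (f / L) ((179/100) / I)" unfolding \<alpha>_def polyak_step_def f_def L_def I_def g_def ..
  have \<alpha>0: "0 \<le> \<alpha>" unfolding \<alpha>_def' using f0 L0 I0 by auto
  have \<alpha>L: "\<alpha> * L \<le> f"
  proof (cases "L = 0")
    case True then show ?thesis using f0 by simp
  next
    case False
    then have "\<alpha> * L \<le> f / L * L" unfolding \<alpha>_def' using L0 by (intro mult_right_mono) auto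
    then show ?thesis using False by simp
  qed
  have \<alpha>g: "\<alpha> * \<bar>g$i\<bar> \<le> 179/100" for i
  proof (cases "I = 0")
    case True
    then have "g$i = 0" using inf_norm_ge[of g i] unfolding I_def by simp
    then show ?thesis by simp
  next
    case False
    then have "\<alpha> * \<bar>g$i\<bar> \<le> (179/100) / I * I" unfolding \<alpha>_def'
      using I0 inf_norm_ge[of g i] \<alpha>0 unfolding I_def
      by (intro mult_mono) auto
    then show ?thesis using False by simp
  qed
  have gxz: "g \<bullet> (x - z) = 2 * f"
  proof -
    have "g \<bullet> (x - z) = r \<bullet> (A *v (x - z))" unfolding g_def' by (rule inner_transpose)
    also have "A *v (x - z) = r" unfolding r_def using Az by (simp add: matrix_vector_mult_diff_distrib)
    finally show ?thesis unfolding f_def' by (simp add: power2_norm_eq_inner)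
  qed
  define x' where "x' = emd_update A b x"
  have x'c: "x'$i = x$i * exp (- \<alpha> * g$i)" for i
    unfolding x'_def emd_update_def \<alpha>_def g_def by simp
  have x'pos: "0 < x'$i" for i using x'c xpos by simp
  have D'sum: "D_h z x' = (\<Sum>i\<in>UNIV. z$i * ln (z$i / x'$i) - z$i + x'$i)" by (rule Dh_form[OF zpos])
  have termeq: "z$i * ln (z$i / x'$i) - z$i + x'$i
      = (z$i * ln (z$i / x$i) - z$i + x$i) - \<alpha> * (g$i * (x$i - z$i)) + x$i * (exp (- (\<alpha> * g$i)) - 1 + \<alpha> * g$i)" for i
  proof -
    have lnx': "ln (z$i / x'$i) = ln (z$i / x$i) + \<alpha> * g$i"
      using zpos[rule_format, of i] xpos[rule_format, of i] unfolding x'c by (simp add: ln_div ln_mult)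
    have e: "exp (- \<alpha> * g$i) = exp (- (\<alpha> * g$i))" by simp
    show ?thesis unfolding lnx' unfolding x'c e by (simp add: algebra_simps)
  qed
  have quad: "x$i * (exp (- (\<alpha> * g$i)) - 1 + \<alpha> * g$i) \<le> \<alpha> * (\<alpha> * (x$i * (g$i)\<^sup>2))" for i
  proof -
    have "\<bar>\<alpha> * g$i\<bar> \<le> 179/100" using \<alpha>g[of i] \<alpha>0 by (simp add: abs_mult)
    then have "- (\<alpha> * g$i) \<le> 179/100" by (rule abs_le_D2)
    then have "- (179/100) \<le> \<alpha> * g$i" by linarith
    then have "exp (- (\<alpha> * g$i)) - 1 + \<alpha> * g$i \<le> (\<alpha> * g$i)\<^sup>2" by (rule exp_quad_bound)
    then have "x$i * (exp (- (\<alpha> * g$i)) - 1 + \<alpha> * g$i) \<le> x$i * (\<alpha> * g$i)\<^sup>2"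
      using xpos by (intro mult_left_mono) (auto simp: less_imp_le)
    then show ?thesis by (simp add: power2_eq_square algebra_simps)
  qed
  have s1: "D_h z x' = D - (\<Sum>i\<in>UNIV. \<alpha> * (g$i * (x$i - z$i))) + (\<Sum>i\<in>UNIV. x$i * (exp (- (\<alpha> * g$i)) - 1 + \<alpha> * g$i))"
    unfolding D'sum Dsum termeq by (simp only: sum.distrib sum_subtractf)
  have s2: "(\<Sum>i\<in>UNIV. \<alpha> * (g$i * (x$i - z$i))) = \<alpha> * (g \<bullet> (x - z))"
    by (simp add: inner_vec_def sum_distrib_left)
  have "D_h z x' = D - \<alpha> * (g \<bullet> (x - z)) + (\<Sum>i\<in>UNIV. x$i * (exp (- (\<alpha> * g$i)) - 1 + \<alpha> * g$i))"
    using s1 s2 by simp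
  also have "(\<Sum>i\<in>UNIV. x$i * (exp (- (\<alpha> * g$i)) - 1 + \<alpha> * g$i)) \<le> (\<Sum>i\<in>UNIV. \<alpha> * (\<alpha> * (x$i * (g$i)\<^sup>2)))"
    by (rule sum_mono) (rule quad)
  also have "(\<Sum>i\<in>UNIV. \<alpha> * (\<alpha> * (x$i * (g$i)\<^sup>2))) = \<alpha> * (\<alpha> * L)"
    unfolding L_def local_norm_sq_def by (simp add: sum_distrib_left)
  also have "\<alpha> * (\<alpha> * L) \<le> \<alpha> * f" using \<alpha>L \<alpha>0 by (intro mult_left_mono) auto
  finally have desc: "D_h z x' \<le> D - \<alpha> * f" unfolding gxz by simp
  then show "D_h z (emd_update A b x) \<le> D_h z x - polyak_step A b x * lsq_f A b x"
    unfolding x'_def D_def \<alpha>_def f_def by simp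
  have c0: "0 \<le> c" using D0 cD unfolding D_def by linarith
  have zm0: "0 < zm" unfolding zm_def using zm .
  have zmi: "zm \<le> z$i" for i unfolding zm_def by (rule vmin_le)
  define \<tau> where "\<tau> = - lambertW0 (- exp (-1 - c / zm))"
  have yb: "- exp (-1) \<le> - exp (-1 - c / zm)" "- exp (-1 - c / zm) < 0"
    using c0 zm0 by (auto simp: divide_nonneg_pos)
  note WP = lambertW0_props[OF yb]
  have \<tau>0: "0 < \<tau>" "\<tau> \<le> 1" unfolding \<tau>_def using WP by auto
  define m where "m = zm * \<tau>"
  have m0: "0 < m" unfolding m_def using zm0 \<tau>0 by simp
  have mz: "m \<le> z$i" for i unfolding m_def using zmi[of i] zm0 \<tau>0
    by (metis mult.right_neutral mult_left_mono order.trans less_imp_le)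
  have mx: "m \<le> x$i" for i
  proof -
    define t where "t = x$i / z$i"
    have t0: "0 < t" unfolding t_def using xpos[rule_format, of i] zpos[rule_format, of i] by simp
    have "z$i * (t - 1 - ln t) = z$i * ln (z$i / x$i) - z$i + x$i"
      unfolding t_def using xpos[rule_format, of i] zpos[rule_format, of i] by (simp add: ln_div algebra_simps)
    also have "\<dots> \<le> D" by (rule Dti)
    finally have "z$i * (t - 1 - ln t) \<le> D" .
    then have "t - 1 - ln t \<le> D / z$i" using zpos by (simp add: mult.commute pos_le_divide_eq)
    also have "D / z$i \<le> D / zm" using D0 zmi[of i] zm0 by (intro divide_left_mono) auto
    also have "D / zm \<le> c / zm" using cD zm0 unfolding D_def by (intro divide_right_mono) auto
    finally have "\<tau> \<le> t" unfolding \<tau>_def using tau_bound[of "c / zm" t] t0 c0 zm0 by (simp add: divide_nonneg_pos)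
    then have "z$i * \<tau> \<le> z$i * t" using zpos by (intro mult_left_mono) (auto simp: less_imp_le)
    moreover have "z$i * t = x$i" unfolding t_def using zpos by (simp add: less_imp_neq[symmetric])
    moreover have "zm * \<tau> \<le> z$i * \<tau>" using zmi[of i] \<tau>0 by (intro mult_right_mono) auto
    ultimately show ?thesis unfolding m_def by linarith
  qed
  define u where "u = (\<chi> i. ln (z$i) - ln (x$i))"
  define S where "S = u \<bullet> (z - x)"
  have Ssum: "S = (\<Sum>i\<in>UNIV. (ln (z$i) - ln (x$i)) * (z$i - x$i))" unfolding S_def u_def inner_vec_def by simp
  have DS: "D \<le> S" unfolding Dsum Ssum by (rule sum_mono) (use Dterm_le zpos xpos in blast)
  have uu: "u \<bullet> u \<le> S / m"
  proof -
    have "u \<bullet> u = (\<Sum>i\<in>UNIV. (ln (z$i) - ln (x$i))\<^sup>2)" unfolding u_def inner_vec_def by (simp add: power2_eq_square)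
    also have "\<dots> \<le> (\<Sum>i\<in>UNIV. (ln (z$i) - ln (x$i)) * (z$i - x$i) / m)"
      by (rule sum_mono) (rule logsq; use zpos xpos m0 mz mx in auto)
    also have "\<dots> = S / m" unfolding Ssum by (simp add: sum_divide_distrib)
    finally show ?thesis .
  qed
  have Ad: "(norm (A *v (z - x)))\<^sup>2 = 2 * f"
  proof -
    have "A *v (z - x) = - r" unfolding r_def using Az by (simp add: matrix_vector_mult_diff_distrib)
    then show ?thesis unfolding f_def' by simp
  qed
  have spec: "lam * S\<^sup>2 \<le> (u \<bullet> u) * (2 * f)"
    using key_spectral[OF A0 uP[folded u_def], of "z - x"] unfolding lam_def S_def Ad .
  have fD: "lam * m * D \<le> 2 * f"
  proof (cases "S = 0")
    case True then have "D = 0" using DS D0 by linarith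
    then show ?thesis using f0 by simp
  next
    case False
    then have S0: "0 < S" using DS D0 by linarith
    have "lam * S\<^sup>2 \<le> S / m * (2 * f)" using spec uu f0 by (meson mult_right_mono order_trans zero_le_mult_iff zero_le_numeral)
    then have "lam * S * S * m \<le> S * (2 * f)" using m0 by (simp add: power2_eq_square field_simps)
    then have "S * (lam * m * S) \<le> S * (2 * f)" by (simp add: algebra_simps)
    then have "lam * m * S \<le> 2 * f" using S0 by simp
    moreover have "lam * m * D \<le> lam * m * S" using DS lam0 m0 by (intro mult_left_mono) auto
    ultimately show ?thesis by linarith
  qed
  have xsum: "(\<Sum>i\<in>UNIV. x$i) \<le> 2 * (Z + c)"
  proof -
    have "(\<Sum>i\<in>UNIV. x$i) \<le> (\<Sum>i\<in>UNIV. 2 * (z$i * ln (z$i / x$i) - z$i + x$i) + 2 * z$i)"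
      by (rule sum_mono) (use x_bound zpos xpos in blast)
    also have "\<dots> = 2 * D + 2 * Z" unfolding Dsum Z_def' by (simp only: sum.distrib sum_distrib_left[symmetric])
    finally have "(\<Sum>i\<in>UNIV. x$i) \<le> 2 * D + 2 * Z" .
    moreover have "D \<le> c" using cD unfolding D_def .
    ultimately have "(\<Sum>i\<in>UNIV. x$i) \<le> 2 * c + 2 * Z" by (meson add_le_cancel_right mult_le_cancel_left_pos order_trans zero_less_numeral)
    then show ?thesis by (simp add: algebra_simps)
  qed
  have rb: "norm r \<le> sqrt M * (3 * (Z + c))"
  proof -
    have "r = A *v (x - z)" unfolding r_def using Az by (simp add: matrix_vector_mult_diff_distrib)
    then have "norm r \<le> sqrt M * (\<Sum>j\<in>UNIV. \<bar>(x - z)$j\<bar>)" unfolding M_def using Av_bound by metis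
    also have "(\<Sum>j\<in>UNIV. \<bar>(x - z)$j\<bar>) \<le> (\<Sum>j\<in>UNIV. x$j + z$j)"
      by (rule sum_mono) (use xpos zpos in \<open>auto simp: abs_le_iff less_imp_le\<close>)
    also have "\<dots> \<le> 3 * (Z + c)" using xsum c0 Z0 unfolding Z_def' by (simp add: sum.distrib)
    finally show ?thesis using M0 by (simp add: mult_left_mono)
  qed
  obtain j0 where j0: "I = \<bar>g$j0\<bar>" unfolding I_def using inf_norm_attained by blast
  have Ib: "I \<le> sqrt M * norm r" unfolding j0 g_def' M_def by (rule colbound)
  have I3: "I \<le> M * (3 * (Z + c))"
  proof -
    have "I \<le> sqrt M * (sqrt M * (3 * (Z + c)))" using Ib rb M0 by (meson mult_left_mono order_trans real_sqrt_ge_zero less_imp_le)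
    then show ?thesis using M0 by (simp add: mult.assoc[symmetric])
  qed
  have I2: "I\<^sup>2 \<le> M * (2 * f)"
  proof -
    have "I\<^sup>2 \<le> (sqrt M * norm r)\<^sup>2" using Ib I0 by (intro power_mono) auto
    also have "\<dots> = M * (2 * f)" unfolding f_def' using M0 by (simp add: power_mult_distrib)
    finally show ?thesis .
  qed
  have LI: "L \<le> (\<Sum>i\<in>UNIV. x$i) * I\<^sup>2"
  proof -
    have "L \<le> (\<Sum>i\<in>UNIV. x$i * I\<^sup>2)" unfolding L_def local_norm_sq_def
    proof (rule sum_mono)
      fix i
      have "(g$i)\<^sup>2 \<le> I\<^sup>2" using inf_norm_ge[of g i] unfolding I_def
        by (metis abs_ge_zero power2_abs power_mono)
      then show "x$i * (g$i)\<^sup>2 \<le> x$i * I\<^sup>2" using xpos by (intro mult_left_mono) (auto simp: less_imp_le)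
    qed
    then show ?thesis by (simp add: sum_distrib_right)
  qed
  define T where "T = lam * m * D / (8 * M * (Z + c))"
  have T_eq: "D_h z x * (lambda_min_pos A * vmin z * (- lambertW0 (- exp (-1 - c / vmin z))))
           / (8 * max_col_sq A * (one_norm z + c)) = T"
    unfolding T_def D_def lam_def m_def \<tau>_def zm_def M_def Z_def by (simp add: algebra_simps)
  have den0: "0 < 8 * M * (Z + c)" using M0 Z0 c0 by simp
  have "T \<le> \<alpha> * f"
  proof (cases "f = 0")
    case True
    then have "lam * m * D \<le> 0" using fD by simp
    then have "D = 0" using lam0 m0 D0 by (smt (verit) mult_pos_pos)
    then show ?thesis unfolding T_def using \<alpha>0 f0 by simp
  next
    case False
    then have fp: "0 < f" using f0 by simp
    have Tf: "T \<le> f / (4 * M * (Z + c))"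
    proof -
      have "T \<le> 2 * f / (8 * M * (Z + c))" unfolding T_def using fD den0 by (intro divide_right_mono) auto
      then show ?thesis by simp
    qed
    have "g \<noteq> 0" using gxz fp by auto
    then obtain j where gj: "g$j \<noteq> 0" by (auto simp: vec_eq_iff)
    have Ip: "0 < I" using inf_norm_ge[of g j] gj unfolding I_def by simp
    have Lp: "0 < L"
    proof -
      have "x$j * (g$j)\<^sup>2 \<le> L" unfolding L_def local_norm_sq_def
        by (rule member_le_sum) (use xpos in \<open>auto simp: less_imp_le\<close>)
      moreover have "0 < x$j * (g$j)\<^sup>2" using xpos gj by simp
      ultimately show ?thesis by linarith
    qed
    have c1: "T \<le> f / L * f"
    proof -
      have "L \<le> 2 * (Z + c) * (M * (2 * f))"
        using LI xsum I2 by (meson mult_mono order_trans sum_nonneg zero_le_power2 xpos less_imp_le Z0 c0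
            add_nonneg_nonneg mult_nonneg_nonneg zero_le_numeral)
      then have "L \<le> f * (4 * M * (Z + c))" by (simp add: algebra_simps)
      then have "f / (4 * M * (Z + c)) \<le> f / L * f"
        using Lp fp den0 by (simp add: divide_simps)
      then show ?thesis using Tf by linarith
    qed
    have c2: "T \<le> (179/100) / I * f"
    proof -
      have "f / (4 * M * (Z + c)) \<le> (179/100) / I * f"
      proof -
        have i3: "I \<le> 3 * (M * (Z + c))" using I3 by (simp add: algebra_simps)
        have mz0: "0 \<le> M * (Z + c)" using M0 Z0 c0 by simp
        have "I * 1 \<le> 4 * M * (Z + c) * (179/100)" using i3 mz0 by (simp add: algebra_simps)
        then show ?thesis using Ip fp den0 by (simp add: divide_simps)
      qed
      then show ?thesis using Tf by linarith
    qed
    show ?thesis unfolding \<alpha>_def' using c1 c2 by (cases "f / L \<le> (179/100) / I") (auto simp: min_def)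
  qed
  then show "D_h z x * (lambda_min_pos A * vmin z * (- lambertW0 (- exp (-1 - c / vmin z))))
           / (8 * max_col_sq A * (one_norm z + c)) \<le> polyak_step A b x * lsq_f A b x"
    unfolding T_eq \<alpha>_def f_def .
qed

lemma optimality:
  fixes A :: "real^'n^'m" and b :: "real^'m" and x0 z :: "real^'n"
  assumes x0: "\<forall>i. 0 < x0$i" and zS: "z \<in> S_plus A b" and zmin: "\<forall>y\<in>S_plus A b. D_h z x0 \<le> D_h y x0"
    and zpos: "\<forall>i. 0 < z$i"
  shows "(\<chi> i. ln (z$i) - ln (x0$i)) \<in> perpA A"
  unfolding perpA_def nullA_def mem_Collect_eq
proof (intro ballI)
  fix q assume "q \<in> {q. A *v q = 0}"
  then have Aq: "A *v q = 0" by simp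
  have Az: "A *v z = b" using zS by (simp add: S_plus_def)
  define zm where "zm = vmin z"
  have zm0: "0 < zm" unfolding zm_def vmin_def using zpos
    by (subst Min_gr_iff) (auto simp: full_SetCompr_eq)
  have zmi: "zm \<le> z$i" for i unfolding zm_def by (rule vmin_le)
  define B where "B = (\<Sum>j\<in>UNIV. \<bar>q$j\<bar>) + 1"
  have B0: "0 < B" unfolding B_def by (simp add: add_nonneg_pos sum_nonneg)
  have qB: "\<bar>q$i\<bar> \<le> B" for i
  proof -
    have "\<bar>q$i\<bar> \<le> (\<Sum>j\<in>UNIV. \<bar>q$j\<bar>)" by (rule member_le_sum) auto
    then show ?thesis unfolding B_def by simp
  qed
  define \<delta> where "\<delta> = zm / B"
  have \<delta>0: "0 < \<delta>" unfolding \<delta>_def using zm0 B0 by simp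
  define \<psi> where "\<psi> = (\<lambda>e. \<Sum>i\<in>UNIV. (z$i + e * q$i) * ln ((z$i + e * q$i) / x0$i) - (z$i + e * q$i) + x0$i)"
  have pos: "0 < z$i + e * q$i" if e: "\<bar>0 - e\<bar> < \<delta>" for e i
  proof -
    have "\<bar>e * q$i\<bar> \<le> \<bar>e\<bar> * B" using qB[of i] by (simp add: abs_mult mult_left_mono)
    also have "\<bar>e\<bar> * B < \<delta> * B" using e B0 by (intro mult_strict_right_mono) auto
    also have "\<delta> * B = zm" unfolding \<delta>_def using B0 by simp
    finally have "\<bar>e * q$i\<bar> < zm" .
    then show ?thesis using zmi[of i] by linarith
  qed
  have loc: "\<forall>e. \<bar>0 - e\<bar> < \<delta> \<longrightarrow> \<psi> 0 \<le> \<psi> e"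
  proof (intro allI impI)
    fix e assume e: "\<bar>0 - e\<bar> < \<delta>"
    define y where "y = z + e *\<^sub>R q"
    have yc: "y$i = z$i + e * q$i" for i unfolding y_def by simp
    have ypos: "\<forall>i. 0 < y$i" using pos[OF e] yc by simp
    have "A *v y = b" unfolding y_def using Az Aq by (simp add: matrix_vector_right_distrib matrix_vector_mult_scaleR)
    then have "y \<in> S_plus A b" using ypos by (auto simp: S_plus_def less_imp_le)
    then have "D_h z x0 \<le> D_h y x0" using zmin by blast
    moreover have "D_h y x0 = \<psi> e" unfolding Dh_form[OF ypos] \<psi>_def yc ..
    moreover have "D_h z x0 = \<psi> 0" unfolding Dh_form[OF zpos] \<psi>_def by simp
    ultimately show "\<psi> 0 \<le> \<psi> e" by simp
  qed
  have der: "DERIV \<psi> 0 :> (\<Sum>i\<in>UNIV. q$i * ln (z$i / x0$i))"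
    unfolding \<psi>_def
  proof (rule DERIV_sum)
    fix i :: 'n assume "i \<in> UNIV"
    have zi: "0 < z$i" and xi: "0 < x0$i" using zpos x0 by auto
    have zi': "z$i \<noteq> 0" and xi': "x0$i \<noteq> 0" using zi xi by auto
    show "((\<lambda>e. (z$i + e * q$i) * ln ((z$i + e * q$i) / x0$i) - (z$i + e * q$i) + x0$i) has_real_derivative q$i * ln (z$i / x0$i)) (at 0)"
      by (auto intro!: derivative_eq_intros simp: zi xi zi' xi' field_simps)
  qed
  have "(\<Sum>i\<in>UNIV. q$i * ln (z$i / x0$i)) = 0" by (rule DERIV_local_min[OF der \<delta>0 loc])
  moreover have "(\<chi> i. ln (z$i) - ln (x0$i)) \<bullet> q = (\<Sum>i\<in>UNIV. q$i * ln (z$i / x0$i))"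
    unfolding inner_vec_def using zpos x0 by (intro sum.cong) (auto simp: ln_div, metis less_irrefl, metis less_irrefl)
  ultimately show "(\<chi> i. ln (z$i) - ln (x0$i)) \<bullet> q = 0" by simp
qed


lemma polyak_nonneg: "0 \<le> polyak_step A b x * lsq_f A b x" if "\<forall>i. 0 < x$i"
proof -
  have f0: "0 \<le> lsq_f A b x" unfolding lsq_f_def by simp
  have L0: "0 \<le> local_norm_sq x (lsq_grad A b x)" unfolding local_norm_sq_def using that
    by (auto intro!: sum_nonneg mult_nonneg_nonneg simp: less_imp_le)
  have "0 \<le> polyak_step A b x" unfolding polyak_step_def using f0 L0 inf_norm_nonneg by auto
  then show ?thesis using f0 by simp
qed

theorem theorem3p8:
  fixes A :: "real^'n^'m" and b :: "real^'m" and x0 z :: "real^'n" and x :: "nat \<Rightarrow> real^'n"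
  assumes "A \<noteq> 0"
    and "S_plus A b \<noteq> {}"
    and "\<forall>i. 0 < x0$i"
    and "x 0 = x0"
    and "\<forall>k. x (Suc k) = emd_update A b (x k)"
    and "z \<in> S_plus A b" and "\<forall>y\<in>S_plus A b. D_h z x0 \<le> D_h y x0"
    and "x \<longlonglongrightarrow> z"
    and "vmin z > 0"
  shows "(\<forall>k. D_h z (x (Suc k)) \<le> D_h z (x k) * rate A z (D_h z (x k)))
       \<and> (\<forall>k. D_h z (x (Suc k)) \<le> D_h z (x k) * rate A z (D_h z x0))
       \<and> (\<lambda>k. rate A z (D_h z (x k))) \<longlonglongrightarrow>
            1 - lambda_min_pos A * vmin z / (8 * max_col_sq A * one_norm z)"
proof -
  note A0 = assms(1) and x0 = assms(3) and xinit = assms(4) and xs = assms(5)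
    and zS = assms(6) and zopt = assms(7) and xlim = assms(8) and zm = assms(9)
  have zpos: "\<forall>i. 0 < z$i" using zm vmin_le[of z] by (meson less_le_trans)
  have Az: "A *v z = b" using zS by (simp add: S_plus_def)
  have inv: "(\<forall>i. 0 < x k $ i) \<and> (\<chi> i. ln (z$i) - ln (x k $ i)) \<in> perpA A" for k
  proof (induction k)
    case 0
    show ?case using x0 optimality[OF x0 zS zopt zpos] unfolding xinit by simp
  next
    case (Suc k)
    define \<alpha> where "\<alpha> = polyak_step A b (x k)"
    define g where "g = lsq_grad A b (x k)"
    have xc: "x (Suc k) $ i = x k $ i * exp (- \<alpha> * g$i)" for i
      unfolding xs[rule_format] emd_update_def \<alpha>_def g_def by simp
    have p: "\<forall>i. 0 < x (Suc k) $ i" using Suc.IH xc by simp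
    have "(\<chi> i. ln (z$i) - ln (x (Suc k) $ i)) = (\<chi> i. ln (z$i) - ln (x k $ i)) + \<alpha> *s g"
    proof (subst vec_eq_iff, intro allI)
      fix i
      have "0 < x k $ i" using Suc.IH by simp
      then show "(\<chi> i. ln (z$i) - ln (x (Suc k) $ i)) $ i = ((\<chi> i. ln (z$i) - ln (x k $ i)) + \<alpha> *s g) $ i"
        unfolding xc by (simp add: ln_mult)
    qed
    moreover have "g \<in> perpA A" unfolding g_def lsq_grad_def by (rule perpA_transpose)
    ultimately have "(\<chi> i. ln (z$i) - ln (x (Suc k) $ i)) \<in> perpA A"
      using Suc.IH perpA_add perpA_scale by metis
    then show ?case using p by simp
  qed
  define d where "d k = D_h z (x k)" for k
  have dnn: "0 \<le> d k" for k
  proof -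
    have "d k = (\<Sum>i\<in>UNIV. z$i * ln (z$i / x k $ i) - z$i + x k $ i)" unfolding d_def by (rule Dh_form[OF zpos])
    also have "0 \<le> \<dots>" by (rule sum_nonneg) (use Dterm_nonneg zpos inv in blast)
    finally show ?thesis .
  qed
  have desc: "d (Suc k) \<le> d k" for k
    using step_lemma(1)[OF A0 Az zm conjunct1[OF inv[of k]] conjunct2[OF inv[of k]] order_refl]
      polyak_nonneg[where A=A and b=b, OF conjunct1[OF inv[of k]]] xs unfolding d_def by simp
  have d0: "d k \<le> D_h z x0" for k
  proof (induction k)
    case 0 then show ?case unfolding d_def xinit by simp
  next
    case (Suc k) then show ?case using desc[of k] by linarith
  qed
  have ineq: "d (Suc k) \<le> d k * rate A z c" if c: "d k \<le> c" for k c
  proof -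
    have c': "D_h z (x k) \<le> c" using c unfolding d_def .
    note S1 = step_lemma(1)[OF A0 Az zm conjunct1[OF inv[of k]] conjunct2[OF inv[of k]] c']
    note S2 = step_lemma(2)[OF A0 Az zm conjunct1[OF inv[of k]] conjunct2[OF inv[of k]] c']
    have "d k * rate A z c = d k - d k * (lambda_min_pos A * vmin z * (- lambertW0 (- exp (-1 - c / vmin z))))
           / (8 * max_col_sq A * (one_norm z + c))"
      unfolding rate_def by (simp add: algebra_simps)
    then show ?thesis using S1 S2 xs unfolding d_def by simp
  qed
  have c1: "\<forall>k. D_h z (x (Suc k)) \<le> D_h z (x k) * rate A z (D_h z (x k))"
    using ineq[OF order_refl] unfolding d_def by blast
  have c2: "\<forall>k. D_h z (x (Suc k)) \<le> D_h z (x k) * rate A z (D_h z x0)"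
    using ineq[OF d0] unfolding d_def by blast
  define zmn where "zmn = vmin z"
  define M where "M = max_col_sq A"
  define Z where "Z = one_norm z"
  define lam where "lam = lambda_min_pos A"
  have M0: "0 < M" unfolding M_def using M_pos[OF A0] .
  have Z0: "0 < Z" unfolding Z_def one_norm_def using zpos by (intro sum_pos) (auto, metis less_irrefl)
  have dform: "d k = (\<Sum>i\<in>UNIV. z$i * ln (z$i / x k $ i) - z$i + x k $ i)" for k
    unfolding d_def by (rule Dh_form[OF zpos])
  have dlim: "d \<longlonglongrightarrow> 0"
  proof -
    have "(\<lambda>k. \<Sum>i\<in>UNIV. z$i * ln (z$i / x k $ i) - z$i + x k $ i)
        \<longlonglongrightarrow> (\<Sum>i\<in>UNIV. z$i * ln (z$i / z$i) - z$i + z$i)"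
      using zpos by (intro tendsto_intros xlim) (auto simp: less_imp_neq[symmetric])
    moreover have "(\<Sum>i\<in>UNIV. z$i * ln (z$i / z$i) - z$i + z$i) = 0"
      using zpos by (simp add: less_imp_neq[symmetric])
    ultimately show ?thesis unfolding dform[abs_def] by simp
  qed
  define Y where "Y k = - exp (-1 - d k / zmn)" for k
  have Ylim: "Y \<longlonglongrightarrow> - exp (-1)"
  proof -
    have "Y \<longlonglongrightarrow> - exp (-1 - 0 / zmn)" unfolding Y_def[abs_def] by (intro tendsto_intros dlim) (use zm in \<open>simp add: zmn_def\<close>)
    then show ?thesis by simp
  qed
  have Yb: "\<forall>k. -exp(-1) \<le> Y k \<and> Y k < 0"
    unfolding Y_def zmn_def using dnn zm by (auto simp: divide_nonneg_pos)
  have Wlim: "(\<lambda>k. lambertW0 (Y k)) \<longlonglongrightarrow> -1" by (rule lambertW0_tendsto[OF Ylim Yb])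
  have "(\<lambda>k. 1 - (- lam * zmn * lambertW0 (Y k)) / (8 * M * (Z + d k)))
        \<longlonglongrightarrow> 1 - (- lam * zmn * (-1)) / (8 * M * (Z + 0))"
    using M0 Z0 by (intro tendsto_intros Wlim dlim) auto
  then have c3: "(\<lambda>k. rate A z (D_h z (x k))) \<longlonglongrightarrow> 1 - lambda_min_pos A * vmin z / (8 * max_col_sq A * one_norm z)"
    unfolding rate_def Y_def d_def lam_def zmn_def M_def Z_def by simp
  show ?thesis using c1 c2 c3 by blast
qed

end
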